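(* Let $s\ge2$, let $H$ be a graph, let $k\ge s+1$ and $n\ge s+2$, and let $\{S_X: X\subseteq\{1,\dots,n\},\ |X|=s\}$ be pairwise distinct $(k-1)$-cliques of $H$ such that for every $(s+1)$-subset $A\subseteq\{1,\dots,n\}$ there is a $k$-clique $Q_A$ of $H$ which contains $S_X$ for every $s$-subset $X\subseteq A$ and contains no $S_Y$ with $Y\not\subseteq A$. Then there exist a $(k-s-1)$-clique $T$ of $H$ and pairwise distinct vertices $x_1,\dots,x_n\in V(H)\setminus T$ such that \[ S_X=T\cup\{x_i: i\in X\}\qquad\text{for every $s$-subset } X\subseteq\{1,\dots,n\}. \]
   Context: All graphs are finite, simple, undirected. A $k$-clique of a graph $H$ is a set of $k$ pairwise adjacent vertices of $H$ (a $0$-clique is the empty set). *)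

theory Defs
  imports Main
begin

definition simple_graph :: "'v set \<Rightarrow> ('v \<Rightarrow> 'v \<Rightarrow> bool) \<Rightarrow> bool" where
  "simple_graph V E \<longleftrightarrow> finite V \<and> (\<forall>u v. E u v \<longrightarrow> u \<in> V \<and> v \<in> V)
     \<and> (\<forall>u v. E u v \<longrightarrow> E v u) \<and> (\<forall>v. \<not> E v v)"

definition is_clique :: "'v set \<Rightarrow> ('v \<Rightarrow> 'v \<Rightarrow> bool) \<Rightarrow> nat \<Rightarrow> 'v set \<Rightarrow> bool" where
  "is_clique V E k C \<longleftrightarrow> C \<subseteq> V \<and> finite C \<and> card C = k
     \<and> (\<forall>u\<in>C. \<forall>v\<in>C. u \<noteq> v \<longrightarrow> E u v)"

end

theory Submission
  imports Defs
begin

lemma clique_subset: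
  assumes "is_clique V E m Q" "C \<subseteq> Q"
  shows "is_clique V E (card C) C"
  using assms unfolding is_clique_def by (auto intro: finite_subset)

lemma extend_set:
  assumes "B \<subseteq> {1..n::nat}" "card B \<le> m" "m \<le> n"
  shows "\<exists>A. B \<subseteq> A \<and> A \<subseteq> {1..n} \<and> card A = m"
proof -
  have fB: "finite B" using assms(1) finite_subset by blast
  have "card ({1..n} - B) = n - card B" using assms(1) fB by (simp add: card_Diff_subset)
  then have "m - card B \<le> card ({1..n} - B)" using assms by simp
  then obtain C where C: "C \<subseteq> {1..n} - B" "card C = m - card B" "finite C"
    by (rule obtain_subset_with_card_n)
  have "card (B \<union> C) = card B + card C" using C fB by (subst card_Un_disjoint) auto
  then show ?thesis using C assms by (intro exI[of _ "B \<union> C"]) auto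
qed

locale L =
  fixes V :: "'v set" and E :: "'v \<Rightarrow> 'v \<Rightarrow> bool"
    and s k n :: nat and S :: "nat set \<Rightarrow> 'v set"
  assumes s2: "s \<ge> 2" and ks: "k \<ge> s + 1" and ns: "n \<ge> s + 2"
    and S_clique: "\<And>X. X \<subseteq> {1..n} \<Longrightarrow> card X = s \<Longrightarrow> is_clique V E (k - 1) (S X)"
    and S_distinct: "inj_on S {X. X \<subseteq> {1..n} \<and> card X = s}"
    and Q: "\<And>A. A \<subseteq> {1..n} \<Longrightarrow> card A = s + 1 \<Longrightarrow>
              \<exists>Q. is_clique V E k Q
                 \<and> (\<forall>X. X \<subseteq> A \<and> card X = s \<longrightarrow> S X \<subseteq> Q)
                 \<and> (\<forall>Y. Y \<subseteq> {1..n} \<and> card Y = s \<and> \<not> Y \<subseteq> A \<longrightarrow> \<not> S Y \<subseteq> Q)"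
begin

definition QQ where "QQ A = (SOME Q. is_clique V E k Q
                 \<and> (\<forall>X. X \<subseteq> A \<and> card X = s \<longrightarrow> S X \<subseteq> Q)
                 \<and> (\<forall>Y. Y \<subseteq> {1..n} \<and> card Y = s \<and> \<not> Y \<subseteq> A \<longrightarrow> \<not> S Y \<subseteq> Q))"

definition g where "g A a = the_elem (QQ A - S (A - {a}))"

definition TT where "TT A = QQ A - g A ` A"

abbreviation ok where "ok A \<equiv> A \<subseteq> {1..n} \<and> card A = s + 1"

lemma QQ:
  assumes "ok A"
  shows "is_clique V E k (QQ A)"
    "\<And>X. X \<subseteq> A \<Longrightarrow> card X = s \<Longrightarrow> S X \<subseteq> QQ A"
    "\<And>Y. Y \<subseteq> {1..n} \<Longrightarrow> card Y = s \<Longrightarrow> \<not> Y \<subseteq> A \<Longrightarrow> \<not> S Y \<subseteq> QQ A"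
proof -
  have "is_clique V E k (QQ A)
                 \<and> (\<forall>X. X \<subseteq> A \<and> card X = s \<longrightarrow> S X \<subseteq> QQ A)
                 \<and> (\<forall>Y. Y \<subseteq> {1..n} \<and> card Y = s \<and> \<not> Y \<subseteq> A \<longrightarrow> \<not> S Y \<subseteq> QQ A)"
    unfolding QQ_def by (rule someI_ex) (rule Q, use assms in auto)
  then show "is_clique V E k (QQ A)"
    "\<And>X. X \<subseteq> A \<Longrightarrow> card X = s \<Longrightarrow> S X \<subseteq> QQ A"
    "\<And>Y. Y \<subseteq> {1..n} \<Longrightarrow> card Y = s \<Longrightarrow> \<not> Y \<subseteq> A \<Longrightarrow> \<not> S Y \<subseteq> QQ A"
    by blast+
qed

lemma card_rm: "ok A \<Longrightarrow> a \<in> A \<Longrightarrow> card (A - {a}) = s"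
  by (simp add: card_Diff_singleton)

lemma g1:
  assumes "ok A" "a \<in> A"
  shows "QQ A - S (A - {a}) = {g A a}"
proof -
  have sub: "S (A - {a}) \<subseteq> QQ A" using QQ(2)[OF assms(1)] card_rm[OF assms] by blast
  have c1: "card (S (A - {a})) = k - 1" using S_clique[of "A - {a}"] assms card_rm[OF assms]
    unfolding is_clique_def by auto
  have c2: "card (QQ A) = k" "finite (QQ A)" using QQ(1)[OF assms(1)] unfolding is_clique_def by auto
  have "card (QQ A - S (A - {a})) = Suc 0" using sub c1 c2 ks
    by (subst card_Diff_subset) (auto intro: finite_subset)
  then obtain x where "QQ A - S (A - {a}) = {x}" by (auto simp: card_1_singleton_iff)
  then show ?thesis unfolding g_def by simp
qed

lemma g2:
  assumes "ok A" "a \<in> A"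
  shows "g A a \<in> QQ A" "g A a \<notin> S (A - {a})" "QQ A = insert (g A a) (S (A - {a}))"
    "S (A - {a}) = QQ A - {g A a}"
proof -
  have sub: "S (A - {a}) \<subseteq> QQ A" using QQ(2)[OF assms(1)] card_rm[OF assms] by blast
  have e: "QQ A - S (A - {a}) = {g A a}" by (rule g1[OF assms])
  show "g A a \<in> QQ A" using e by blast
  show "g A a \<notin> S (A - {a})" using e by blast
  show "QQ A = insert (g A a) (S (A - {a}))" using e sub by blast
  show "S (A - {a}) = QQ A - {g A a}" using e sub by blast
qed

lemma g_inj:
  assumes "ok A" "a \<in> A" "b \<in> A" "g A a = g A b"
  shows "a = b"
proof -
  have "S (A - {a}) = S (A - {b})" using g2(4)[OF assms(1,2)] g2(4)[OF assms(1,3)] assms(4) by simp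
  then have "A - {a} = A - {b}" using S_distinct card_rm[OF assms(1,2)] card_rm[OF assms(1,3)] assms(1)
    unfolding inj_on_def by blast
  then show ?thesis using assms(2,3) by blast
qed

lemma star:
  assumes W: "W \<subseteq> {1..n}" "card W = s - 1" and abc: "a \<in> {1..n}" "b \<in> {1..n}" "c \<in> {1..n}"
    "a \<notin> W" "b \<notin> W" "c \<notin> W" "a \<noteq> b" "a \<noteq> c" "b \<noteq> c"
  shows "S (insert a W) \<inter> S (insert b W) \<subseteq> S (insert c W)"
proof
  fix v assume v: "v \<in> S (insert a W) \<inter> S (insert b W)"
  show "v \<in> S (insert c W)"
  proof (rule ccontr)
    assume vn: "v \<notin> S (insert c W)"
    have fW: "finite W" using W finite_subset by blast
    define A where "A = insert a (insert b W)"
    define A' where "A' = insert a (insert c W)"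
    define A'' where "A'' = insert b (insert c W)"
    have okA: "ok A" "ok A'" "ok A''" unfolding A_def A'_def A''_def using W abc fW s2 by auto
    have mem: "a \<in> A" "b \<in> A" "a \<in> A'" "c \<in> A'" "b \<in> A''" "c \<in> A''"
      unfolding A_def A'_def A''_def by auto
    have e: "A - {b} = insert a W" "A - {a} = insert b W" "A' - {c} = insert a W" "A' - {a} = insert c W"
      "A'' - {c} = insert b W" "A'' - {b} = insert c W"
      unfolding A_def A'_def A''_def using abc by auto
    have A1: "S (insert a W) = QQ A - {g A b}" "S (insert b W) = QQ A - {g A a}"
      using g2(4)[OF okA(1) mem(2)] g2(4)[OF okA(1) mem(1)] e by simp_all
    have A2: "S (insert a W) = QQ A' - {g A' c}" "S (insert c W) = QQ A' - {g A' a}"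
      using g2(4)[OF okA(2) mem(4)] g2(4)[OF okA(2) mem(3)] e by simp_all
    have A3: "S (insert b W) = QQ A'' - {g A'' c}" "S (insert c W) = QQ A'' - {g A'' b}"
      using g2(4)[OF okA(3) mem(6)] g2(4)[OF okA(3) mem(5)] e by simp_all
    have gq: "g A' c \<in> QQ A'" "g A'' c \<in> QQ A''" "g A' a \<in> QQ A'" "g A'' b \<in> QQ A''"
      using g2(1) okA mem by auto
    have va: "v = g A' a" using A2 v vn by blast
    have vb: "v = g A'' b" using A3 v vn by blast
    define \<beta> where "\<beta> = g A' c"
    have bv: "\<beta> \<noteq> v" unfolding \<beta>_def va using g_inj[OF okA(2) mem(4) mem(3)] abc by auto
    have QA': "QQ A' = insert \<beta> (S (insert a W))" using A2(1) gq(1) unfolding \<beta>_def by blast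
    have SZ: "S (insert c W) = insert \<beta> (S (insert a W)) - {v}"
      using A2(2) QA' va by simp
    have bX: "\<beta> \<notin> S (insert a W)" using A2(1) unfolding \<beta>_def by blast
    show False
    proof (cases "\<beta> \<in> S (insert b W)")
      case True
      have s1: "S (insert a W) \<subseteq> QQ A" "S (insert b W) \<subseteq> QQ A" using A1 by auto
      have "S (insert c W) \<subseteq> QQ A" using SZ True s1 by auto
      moreover have "insert c W \<subseteq> {1..n}" "card (insert c W) = s" "\<not> insert c W \<subseteq> A"
        using W abc fW s2 unfolding A_def by auto
      ultimately show False using QQ(3)[OF okA(1), of "insert c W"] by simp
    next
      case False
      have QA'': "QQ A'' = insert (g A'' c) (S (insert b W))" using A3(1) gq(2) by blast
      have SZ2: "S (insert c W) = insert (g A'' c) (S (insert b W)) - {v}"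
        using A3(2) QA'' vb by simp
      have "\<beta> \<in> S (insert c W)" using SZ bv by blast
      then have "\<beta> = g A'' c" using SZ2 False by blast
      then have "insert \<beta> (S (insert a W)) - {v} = insert \<beta> (S (insert b W)) - {v}"
        using SZ SZ2 by simp
      then have eq: "insert \<beta> (S (insert a W)) - {v} = insert \<beta> (S (insert b W)) - {v}" .
      have "S (insert a W) = insert v ((insert \<beta> (S (insert a W)) - {v}) - {\<beta>})"
        using bX v bv by auto
      also have "\<dots> = insert v ((insert \<beta> (S (insert b W)) - {v}) - {\<beta>})" using eq by simp
      also have "\<dots> = S (insert b W)" using False v bv by auto
      finally have "S (insert a W) = S (insert b W)" .
      moreover have "insert a W \<subseteq> {1..n}" "card (insert a W) = s"
        "insert b W \<subseteq> {1..n}" "card (insert b W) = s"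
        using W abc fW s2 by auto
      ultimately have "insert a W = insert b W" using S_distinct unfolding inj_on_def by blast
      then have "a \<in> insert b W" by (metis insertI1)
      then show False using abc by simp
    qed
  qed
qed

lemma F2:
  assumes okA: "ok A" and ab: "a \<in> A" "b \<in> A" "a \<noteq> b" and c: "c \<in> {1..n}" "c \<notin> A"
  shows "g A a = g (insert c (A - {b})) a"
proof -
  define W where "W = A - {a, b}"
  define A' where "A' = insert c (A - {b})"
  have fA: "finite A" using okA finite_subset by blast
  have W: "W \<subseteq> {1..n}" "card W = s - 1" "a \<notin> W" "b \<notin> W" "c \<notin> W"
    unfolding W_def using okA ab c fA by (auto simp: card_Diff_subset)
  have okA': "ok A'" unfolding A'_def using okA ab c fA by (auto simp: card_Diff_singleton)
  have mem: "a \<in> A'" "c \<in> A'" unfolding A'_def using ab by auto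
  have e: "A - {b} = insert a W" "A - {a} = insert b W" "A' - {c} = insert a W" "A' - {a} = insert c W"
    unfolding W_def A'_def using ab c by auto
  have A1: "S (insert a W) = QQ A - {g A b}" "S (insert b W) = QQ A - {g A a}"
    using g2(4)[OF okA ab(2)] g2(4)[OF okA ab(1)] e by simp_all
  have A2: "S (insert a W) = QQ A' - {g A' c}" "S (insert c W) = QQ A' - {g A' a}"
    using g2(4)[OF okA' mem(2)] g2(4)[OF okA' mem(1)] e by simp_all
  have ne: "g A' a \<noteq> g A' c" using g_inj[OF okA' mem] ab c by auto
  have "g A' a \<in> S (insert a W)" using A2(1) g2(1)[OF okA' mem(1)] ne by blast
  moreover have "g A' a \<notin> S (insert c W)" using A2(2) by blast
  moreover have "S (insert a W) \<inter> S (insert b W) \<subseteq> S (insert c W)"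
  proof -
    have "a \<in> {1..n}" "b \<in> {1..n}" using okA ab by auto
    then show ?thesis using star[OF W(1,2), of a b c] W ab c by auto
  qed
  ultimately have "g A' a \<in> QQ A" "g A' a \<notin> QQ A - {g A a}" using A1 by blast+
  then show ?thesis unfolding A'_def by auto
qed

lemma F2T:
  assumes okA: "ok A" and b: "b \<in> A" and c: "c \<in> {1..n}" "c \<notin> A"
  shows "TT A = TT (insert c (A - {b}))"
proof -
  define A' where "A' = insert c (A - {b})"
  have fA: "finite A" using okA finite_subset by blast
  have okA': "ok A'" unfolding A'_def using okA b c fA by (auto simp: card_Diff_singleton)
  have mem: "c \<in> A'" unfolding A'_def by auto
  have e: "A' - {c} = A - {b}" unfolding A'_def using c by auto
  have gg: "g A ` (A - {b}) = g A' ` (A - {b})"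
  proof (rule image_cong[OF refl])
    fix a' assume a': "a' \<in> A - {b}"
    show "g A a' = g A' a'" unfolding A'_def
      by (rule F2) (use a' okA b c in auto)
  qed
  have "TT A = S (A - {b}) - g A ` (A - {b})"
  proof -
    have "A = insert b (A - {b})" using b by blast
    then have "g A ` A = insert (g A b) (g A ` (A - {b}))" by (metis image_insert)
    then show ?thesis unfolding TT_def using g2(2,3)[OF okA b] by auto
  qed
  moreover have "TT A' = S (A - {b}) - g A' ` (A - {b})"
  proof -
    have "A' = insert c (A' - {c})" using mem by blast
    then have "g A' ` A' = insert (g A' c) (g A' ` (A' - {c}))" by (metis image_insert)
    then show ?thesis unfolding TT_def using g2(2,3)[OF okA' mem] e by auto
  qed
  ultimately show ?thesis using gg unfolding A'_def by simp
qed

lemma conn: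
  "card (A - A') = m \<Longrightarrow> ok A \<Longrightarrow> ok A' \<Longrightarrow> (\<forall>a \<in> A \<inter> A'. g A a = g A' a) \<and> TT A = TT A'"
proof (induction m arbitrary: A)
  case 0
  have fA: "finite A" "finite A'" using 0 finite_subset by blast+
  then have "A \<subseteq> A'" using 0 by auto
  then have "A = A'" using card_subset_eq fA 0 by metis
  then show ?case by simp
next
  case (Suc m)
  have fA: "finite A" "finite A'" using Suc finite_subset by blast+
  obtain b where b: "b \<in> A" "b \<notin> A'" using Suc(2) by (metis Diff_iff card.empty empty_iff ex_in_conv nat.distinct(1))
  have "card (A' - A) = card (A - A')"
    using card_Diff_subset_Int[of A' A] card_Diff_subset_Int[of A A'] fA Suc(3,4)
    by (simp add: Int_commute)
  then obtain c where c: "c \<in> A'" "c \<notin> A" using Suc(2) by (metis Diff_iff card.empty empty_iff ex_in_conv nat.distinct(1))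
  define A'' where "A'' = insert c (A - {b})"
  have okA'': "ok A''" unfolding A''_def using Suc(3,4) b c fA by (auto simp: card_Diff_singleton)
  have "A'' - A' = (A - A') - {b}" unfolding A''_def using c by auto
  then have "card (A'' - A') = m" using Suc(2) b by (simp add: card_Diff_singleton)
  from Suc.IH[OF this okA'' Suc(4)] have IH: "\<forall>a\<in>A'' \<inter> A'. g A'' a = g A' a" "TT A'' = TT A'" by blast+
  have cN: "c \<in> {1..n}" using c Suc(4) by blast
  have "\<forall>a\<in>A \<inter> A'. g A a = g A' a"
  proof
    fix a assume a: "a \<in> A \<inter> A'"
    then have "a \<noteq> b" using b by blast
    then have "g A a = g A'' a" unfolding A''_def using F2[OF Suc(3) _ b(1) _ cN c(2)] a by blast
    also have "\<dots> = g A' a" using IH a \<open>a \<noteq> b\<close> unfolding A''_def by blast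
    finally show "g A a = g A' a" .
  qed
  moreover have "TT A = TT A'" using F2T[OF Suc(3) b(1) cN c(2)] IH unfolding A''_def by simp
  ultimately show ?case by blast
qed

lemma main:
  shows "\<exists>T x. is_clique V E (k - s - 1) T
           \<and> inj_on x {1..n} \<and> (\<forall>i\<in>{1..n}. x i \<in> V - T)
           \<and> (\<forall>X. X \<subseteq> {1..n} \<and> card X = s \<longrightarrow> S X = T \<union> x ` X)"
proof -
  have exA: "\<exists>A. B \<subseteq> A \<and> ok A" if "B \<subseteq> {1..n}" "card B \<le> s + 1" for B
    using extend_set[OF that] ns by auto
  obtain A0 where A0: "ok A0" using exA[of "{}"] by auto
  define x where "x i = g (SOME A. ok A \<and> i \<in> A) i" for i
  define T where "T = TT A0"
  have gx: "g A i = x i" if "ok A" "i \<in> A" for A i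
  proof -
    have "\<exists>A. ok A \<and> i \<in> A" using exA[of "{i}"] that s2 by auto
    define A1 where "A1 = (SOME A. ok A \<and> i \<in> A)"
    have A1: "ok A1 \<and> i \<in> A1" unfolding A1_def using \<open>\<exists>A. ok A \<and> i \<in> A\<close> by (rule someI_ex)
    have xi: "x i = g A1 i" unfolding x_def A1_def by simp
    have "\<forall>a\<in>A \<inter> A1. g A a = g A1 a" using conn[OF refl that(1), of A1] A1 by blast
    then show ?thesis using xi that(2) A1 by simp
  qed
  have TA: "TT A = T" if "ok A" for A unfolding T_def using conn[OF refl that A0] by blast
  have fin0: "finite A0" using A0 finite_subset by blast
  have sub0: "g A0 ` A0 \<subseteq> QQ A0" using g2(1)[OF A0] by blast
  have inj0: "inj_on (g A0) A0" using g_inj[OF A0] unfolding inj_on_def by blast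
  have q0: "is_clique V E k (QQ A0)" by (rule QQ(1)[OF A0])
  have "card T = k - (s + 1)" unfolding T_def TT_def
    using card_Diff_subset[OF finite_imageI[OF fin0] sub0] card_image[OF inj0] A0 q0
    unfolding is_clique_def by simp
  moreover have "is_clique V E (card T) T" using clique_subset[OF q0] unfolding T_def TT_def by blast
  ultimately have cl: "is_clique V E (k - s - 1) T" by simp
  have inj: "inj_on x {1..n}"
  proof (rule inj_onI)
    fix i j assume ij: "i \<in> {1..n}" "j \<in> {1..n}" "x i = x j"
    have "card {i, j} \<le> s + 1" using s2 by (cases "i = j") auto
    then obtain A where A: "{i, j} \<subseteq> A" "ok A" using exA[of "{i,j}"] ij by auto
    then show "i = j" using gx[OF A(2)] g_inj[OF A(2)] ij by auto
  qed
  have xV: "\<forall>i\<in>{1..n}. x i \<in> V - T"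
  proof
    fix i assume i: "i \<in> {1..n}"
    then obtain A where A: "i \<in> A" "ok A" using exA[of "{i}"] s2 by auto
    have "x i \<in> QQ A" using gx[OF A(2,1)] g2(1)[OF A(2,1)] by simp
    moreover have "QQ A \<subseteq> V" using QQ(1)[OF A(2)] unfolding is_clique_def by blast
    moreover have "x i \<notin> T"
    proof -
      have "x i \<in> g A ` A" using gx[OF A(2,1)] A(1) by (metis imageI)
      then show ?thesis using TA[OF A(2)] unfolding TT_def by auto
    qed
    ultimately show "x i \<in> V - T" by blast
  qed
  have SX: "S X = T \<union> x ` X" if X: "X \<subseteq> {1..n}" "card X = s" for X
  proof -
    have fX: "finite X" using X finite_subset by blast
    have "X \<noteq> {1..n}"
    proof
      assume "X = {1..n}"
      then have "card X = n" by simp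
      then show False using X ns by simp
    qed
    then obtain c where c: "c \<in> {1..n}" "c \<notin> X" using X by blast
    define A where "A = insert c X"
    have okA: "ok A" unfolding A_def using X c fX by auto
    have cA: "c \<in> A" unfolding A_def by simp
    have e: "A - {c} = X" unfolding A_def using c by auto
    have s1: "S X = QQ A - {g A c}" using g2(4)[OF okA cA] e by simp
    have "g A ` A \<subseteq> QQ A" using g2(1)[OF okA] by auto
    then have q: "QQ A = T \<union> g A ` A" using TA[OF okA] unfolding TT_def by auto
    have gA: "g A ` A = insert (g A c) (g A ` X)" unfolding A_def by simp
    have n1: "g A c \<notin> g A ` X" using g_inj[OF okA cA] c unfolding A_def by auto
    have n2: "g A c \<notin> T" using TA[OF okA] cA unfolding TT_def by blast
    have "S X = (T \<union> insert (g A c) (g A ` X)) - {g A c}" using s1 q gA by simp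
    also have "\<dots> = T \<union> g A ` X" using n1 n2 by auto
    finally have "S X = T \<union> g A ` X" .
    moreover have "g A ` X = x ` X" using gx[OF okA] unfolding A_def by auto
    ultimately show ?thesis by simp
  qed
  show ?thesis using cl inj xV SX by blast
qed

end

theorem lemma4p20:
  fixes V :: "'v set" and E :: "'v \<Rightarrow> 'v \<Rightarrow> bool"
    and s k n :: nat and S :: "nat set \<Rightarrow> 'v set"
  assumes graph: "simple_graph V E"
    and s2: "s \<ge> 2" and ks: "k \<ge> s + 1" and ns: "n \<ge> s + 2"
    and S_clique: "\<And>X. X \<subseteq> {1..n} \<Longrightarrow> card X = s \<Longrightarrow> is_clique V E (k - 1) (S X)"
    and S_distinct: "inj_on S {X. X \<subseteq> {1..n} \<and> card X = s}"
    and Q: "\<And>A. A \<subseteq> {1..n} \<Longrightarrow> card A = s + 1 \<Longrightarrow>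
              \<exists>Q. is_clique V E k Q
                 \<and> (\<forall>X. X \<subseteq> A \<and> card X = s \<longrightarrow> S X \<subseteq> Q)
                 \<and> (\<forall>Y. Y \<subseteq> {1..n} \<and> card Y = s \<and> \<not> Y \<subseteq> A \<longrightarrow> \<not> S Y \<subseteq> Q)"
  shows "\<exists>T x. is_clique V E (k - s - 1) T
           \<and> inj_on x {1..n} \<and> (\<forall>i\<in>{1..n}. x i \<in> V - T)
           \<and> (\<forall>X. X \<subseteq> {1..n} \<and> card X = s \<longrightarrow> S X = T \<union> x ` X)"
proof -
  interpret L V E s k n S
    using s2 ks ns S_clique S_distinct Q by unfold_locales blast+
  show ?thesis by (rule main)
qed

end
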